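(* Let $(\mathbf M,\tau)$ be a state BL-algebra satisfying: (a) if $\tau$ is faithful, then $\tau(\mathbf M)$ is a subdirectly irreducible BL-algebra; (b) $\mathrm{Ker}(\tau)$ is either the trivial hoop $\{1\}$ or a subdirectly irreducible hoop; (c) $\mathrm{Ker}(\tau)$ and $\tau(M)$ have the disjunction property, i.e. for all $x\in\mathrm{Ker}(\tau)$ and $y\in\tau(M)$, $x\vee y=1$ implies $x=1$ or $y=1$. Then $(\mathbf M,\tau)$ is subdirectly irreducible.
   Context: A BL-algebra is an algebra $\mathbf M=(M;\wedge,\vee,\odot,\to,0,1)$ of type $\langle 2,2,2,2,0,0\rangle$ such that $(M;\wedge,\vee,0,1)$ is a bounded lattice, $(M;\odot,1)$ is a commutative monoid, and for all $a,b,c$: $c\le a\to b$ iff $a\odot c\le b$; $a\wedge b=a\odot(a\to b)$; $(a\to b)\vee(b\to a)=1$. A filter is a nonempty subset closed under $\odot$ and upward closed. A state-operator on $\mathbf M$ is a map $\tau:M\to M$ such that for all $x,y$: $\tau(0)=0$; $\tau(x\to y)=\tau(x)\to\tau(x\wedge y)$; $\tau(x\odot y)=\tau(x)\odot\tau(x\to(x\odot y))$; $\tau(\tau(x)\odot\tau(y))=\tau(x)\odot\tau(y)$; $\tau(\tau(x)\to\tau(y))=\tau(x)\to\tau(y)$; $(\mathbf M,\tau)$ is a state BL-algebra (algebra with extra unary operation $\tau$). Its congruences correspond to $\tau$-filters (filters $F$ with $\tau(F)\subseteq F$), so it is subdirectly irreducible iff it has a least $\tau$-filter different from $\{1\}$.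 $\mathrm{Ker}(\tau)=\{a:\tau(a)=1\}$; $\tau$ is faithful if $\mathrm{Ker}(\tau)=\{1\}$. $\tau(M)$ is a subalgebra (BL-algebra $\tau(\mathbf M)$). $\mathrm{Ker}(\tau)$ is a hoop under $\odot,\to,1$; its filters are nonempty subsets closed under $\odot$ and upward closed in $\mathrm{Ker}(\tau)$, and it is subdirectly irreducible if it has a least filter different from $\{1\}$. *)

theory Defs
  imports Main
begin

definition lat_le :: "('a \<Rightarrow> 'a \<Rightarrow> 'a) \<Rightarrow> 'a \<Rightarrow> 'a \<Rightarrow> bool" where
  "lat_le meet x y \<longleftrightarrow> meet x y = x"

definition BL_algebra ::
  "'a set \<Rightarrow> ('a \<Rightarrow> 'a \<Rightarrow> 'a) \<Rightarrow> ('a \<Rightarrow> 'a \<Rightarrow> 'a) \<Rightarrow> ('a \<Rightarrow> 'a \<Rightarrow> 'a)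
    \<Rightarrow> ('a \<Rightarrow> 'a \<Rightarrow> 'a) \<Rightarrow> 'a \<Rightarrow> 'a \<Rightarrow> bool" where
  "BL_algebra M meet join mult imp zero one \<longleftrightarrow>
     zero \<in> M \<and> one \<in> M \<and>
     (\<forall>x\<in>M. \<forall>y\<in>M. meet x y \<in> M \<and> join x y \<in> M \<and> mult x y \<in> M \<and> imp x y \<in> M) \<and>
     \<comment> \<open>bounded lattice\<close>
     (\<forall>x\<in>M. \<forall>y\<in>M. meet x y = meet y x \<and> join x y = join y x) \<and>
     (\<forall>x\<in>M. \<forall>y\<in>M. \<forall>z\<in>M. meet (meet x y) z = meet x (meet y z) \<and>
                             join (join x y) z = join x (join y z)) \<and>
     (\<forall>x\<in>M. \<forall>y\<in>M. meet x (join x y) = x \<and> join x (meet x y) = x) \<and>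
     (\<forall>x\<in>M. lat_le meet zero x \<and> lat_le meet x one) \<and>
     \<comment> \<open>commutative monoid\<close>
     (\<forall>x\<in>M. \<forall>y\<in>M. \<forall>z\<in>M. mult (mult x y) z = mult x (mult y z)) \<and>
     (\<forall>x\<in>M. \<forall>y\<in>M. mult x y = mult y x) \<and>
     (\<forall>x\<in>M. mult x one = x) \<and>
     \<comment> \<open>residuation, divisibility, prelinearity\<close>
     (\<forall>a\<in>M. \<forall>b\<in>M. \<forall>c\<in>M. lat_le meet c (imp a b) \<longleftrightarrow> lat_le meet (mult a c) b) \<and>
     (\<forall>a\<in>M. \<forall>b\<in>M. meet a b = mult a (imp a b)) \<and>
     (\<forall>a\<in>M. \<forall>b\<in>M. join (imp a b) (imp b a) = one)"

definition state_operator ::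
  "'a set \<Rightarrow> ('a \<Rightarrow> 'a \<Rightarrow> 'a) \<Rightarrow> ('a \<Rightarrow> 'a \<Rightarrow> 'a) \<Rightarrow> ('a \<Rightarrow> 'a \<Rightarrow> 'a)
    \<Rightarrow> ('a \<Rightarrow> 'a \<Rightarrow> 'a) \<Rightarrow> 'a \<Rightarrow> 'a \<Rightarrow> ('a \<Rightarrow> 'a) \<Rightarrow> bool" where
  "state_operator M meet join mult imp zero one tau \<longleftrightarrow>
     (\<forall>x\<in>M. tau x \<in> M) \<and>
     tau zero = zero \<and>
     (\<forall>x\<in>M. \<forall>y\<in>M. tau (imp x y) = imp (tau x) (tau (meet x y))) \<and>
     (\<forall>x\<in>M. \<forall>y\<in>M. tau (mult x y) = mult (tau x) (tau (imp x (mult x y)))) \<and>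
     (\<forall>x\<in>M. \<forall>y\<in>M. tau (mult (tau x) (tau y)) = mult (tau x) (tau y)) \<and>
     (\<forall>x\<in>M. \<forall>y\<in>M. tau (imp (tau x) (tau y)) = imp (tau x) (tau y))"

definition state_BL_algebra ::
  "'a set \<Rightarrow> ('a \<Rightarrow> 'a \<Rightarrow> 'a) \<Rightarrow> ('a \<Rightarrow> 'a \<Rightarrow> 'a) \<Rightarrow> ('a \<Rightarrow> 'a \<Rightarrow> 'a)
    \<Rightarrow> ('a \<Rightarrow> 'a \<Rightarrow> 'a) \<Rightarrow> 'a \<Rightarrow> 'a \<Rightarrow> ('a \<Rightarrow> 'a) \<Rightarrow> bool" where
  "state_BL_algebra M meet join mult imp zero one tau \<longleftrightarrow>
     BL_algebra M meet join mult imp zero one \<and>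
     state_operator M meet join mult imp zero one tau"

definition BL_filter ::
  "'a set \<Rightarrow> ('a \<Rightarrow> 'a \<Rightarrow> 'a) \<Rightarrow> ('a \<Rightarrow> 'a \<Rightarrow> 'a) \<Rightarrow> 'a set \<Rightarrow> bool" where
  "BL_filter S meet mult F \<longleftrightarrow>
     F \<subseteq> S \<and> F \<noteq> {} \<and>
     (\<forall>x\<in>F. \<forall>y\<in>F. mult x y \<in> F) \<and>
     (\<forall>x\<in>F. \<forall>y\<in>S. lat_le meet x y \<longrightarrow> y \<in> F)"

definition hoop_filter ::
  "'a set \<Rightarrow> ('a \<Rightarrow> 'a \<Rightarrow> 'a) \<Rightarrow> ('a \<Rightarrow> 'a \<Rightarrow> 'a) \<Rightarrow> 'a \<Rightarrow> 'a set \<Rightarrow> bool" where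
  "hoop_filter H mult imp one F \<longleftrightarrow>
     F \<subseteq> H \<and> F \<noteq> {} \<and>
     (\<forall>x\<in>F. \<forall>y\<in>F. mult x y \<in> F) \<and>
     (\<forall>x\<in>F. \<forall>y\<in>H. imp x y = one \<longrightarrow> y \<in> F)"

definition tau_filter ::
  "'a set \<Rightarrow> ('a \<Rightarrow> 'a \<Rightarrow> 'a) \<Rightarrow> ('a \<Rightarrow> 'a \<Rightarrow> 'a) \<Rightarrow> ('a \<Rightarrow> 'a) \<Rightarrow> 'a set \<Rightarrow> bool" where
  "tau_filter M meet mult tau F \<longleftrightarrow> BL_filter M meet mult F \<and> tau ` F \<subseteq> F"

text \<open>A structure is subdirectly irreducible iff it has a least filter (of the relevant kind)
  different from the trivial filter {one}.\<close>
definition least_nontrivial :: "('a set \<Rightarrow> bool) \<Rightarrow> 'a \<Rightarrow> bool" where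
  "least_nontrivial P one \<longleftrightarrow>
     (\<exists>F0. P F0 \<and> F0 \<noteq> {one} \<and> (\<forall>F. P F \<and> F \<noteq> {one} \<longrightarrow> F0 \<subseteq> F))"

definition SI_state_BL ::
  "'a set \<Rightarrow> ('a \<Rightarrow> 'a \<Rightarrow> 'a) \<Rightarrow> ('a \<Rightarrow> 'a \<Rightarrow> 'a) \<Rightarrow> 'a \<Rightarrow> ('a \<Rightarrow> 'a) \<Rightarrow> bool" where
  "SI_state_BL M meet mult one tau \<longleftrightarrow> least_nontrivial (tau_filter M meet mult tau) one"

definition SI_BL ::
  "'a set \<Rightarrow> ('a \<Rightarrow> 'a \<Rightarrow> 'a) \<Rightarrow> ('a \<Rightarrow> 'a \<Rightarrow> 'a) \<Rightarrow> 'a \<Rightarrow> bool" where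
  "SI_BL S meet mult one \<longleftrightarrow> least_nontrivial (BL_filter S meet mult) one"

definition SI_hoop ::
  "'a set \<Rightarrow> ('a \<Rightarrow> 'a \<Rightarrow> 'a) \<Rightarrow> ('a \<Rightarrow> 'a \<Rightarrow> 'a) \<Rightarrow> 'a \<Rightarrow> bool" where
  "SI_hoop H mult imp one \<longleftrightarrow> least_nontrivial (hoop_filter H mult imp one) one"

definition Ker :: "'a set \<Rightarrow> 'a \<Rightarrow> ('a \<Rightarrow> 'a) \<Rightarrow> 'a set" where
  "Ker M one tau = {a \<in> M. tau a = one}"

definition faithful :: "'a set \<Rightarrow> 'a \<Rightarrow> ('a \<Rightarrow> 'a) \<Rightarrow> bool" where
  "faithful M one tau \<longleftrightarrow> Ker M one tau = {one}"

end

theory Submission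
  imports Defs
begin

locale sbl =
  fixes M :: "'a set" and meet join mult imp :: "'a \<Rightarrow> 'a \<Rightarrow> 'a"
    and zero one :: 'a and tau :: "'a \<Rightarrow> 'a"
  assumes S: "state_BL_algebra M meet join mult imp zero one tau"
begin

abbreviation le where "le \<equiv> lat_le meet"

lemma BL: "BL_algebra M meet join mult imp zero one"
  using S unfolding state_BL_algebra_def by blast
lemma SO: "state_operator M meet join mult imp zero one tau"
  using S unfolding state_BL_algebra_def by blast

lemma one_in[simp]: "one \<in> M" using BL by (auto simp: BL_algebra_def)
lemma cl[simp]: "x \<in> M \<Longrightarrow> y \<in> M \<Longrightarrow> meet x y \<in> M \<and> join x y \<in> M \<and> mult x y \<in> M \<and> imp x y \<in> M"
  using BL by (auto simp: BL_algebra_def)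
lemma tau_in[simp]: "x \<in> M \<Longrightarrow> tau x \<in> M" using SO unfolding state_operator_def by blast
lemma meet_comm: "x \<in> M \<Longrightarrow> y \<in> M \<Longrightarrow> meet x y = meet y x"
  using BL by (auto simp: BL_algebra_def)
lemma join_comm: "x \<in> M \<Longrightarrow> y \<in> M \<Longrightarrow> join x y = join y x"
  using BL by (auto simp: BL_algebra_def)
lemma meet_assoc: "x \<in> M \<Longrightarrow> y \<in> M \<Longrightarrow> z \<in> M \<Longrightarrow> meet (meet x y) z = meet x (meet y z)"
  using BL by (auto simp: BL_algebra_def)
lemma absorb: "x \<in> M \<Longrightarrow> y \<in> M \<Longrightarrow> meet x (join x y) = x \<and> join x (meet x y) = x"
  using BL by (auto simp: BL_algebra_def)
lemma top: "x \<in> M \<Longrightarrow> le x one"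
  using BL by (auto simp: BL_algebra_def)
lemma mult_comm: "x \<in> M \<Longrightarrow> y \<in> M \<Longrightarrow> mult x y = mult y x"
  using BL by (auto simp: BL_algebra_def)
lemma mult_one[simp]: "x \<in> M \<Longrightarrow> mult x one = x"
  using BL by (auto simp: BL_algebra_def)
lemma one_mult[simp]: "x \<in> M \<Longrightarrow> mult one x = x"
  using mult_comm mult_one one_in by metis
lemma res: "a \<in> M \<Longrightarrow> b \<in> M \<Longrightarrow> c \<in> M \<Longrightarrow> le c (imp a b) \<longleftrightarrow> le (mult a c) b"
  using BL by (auto simp: BL_algebra_def)

lemma refl: "x \<in> M \<Longrightarrow> le x x"
  unfolding lat_le_def using absorb[of x x] absorb[of x "meet x x"] by (metis cl)
lemma trans: "x \<in> M \<Longrightarrow> y \<in> M \<Longrightarrow> z \<in> M \<Longrightarrow> le x y \<Longrightarrow> le y z \<Longrightarrow> le x z"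
  unfolding lat_le_def by (metis meet_assoc)
lemma antisym: "x \<in> M \<Longrightarrow> y \<in> M \<Longrightarrow> le x y \<Longrightarrow> le y x \<Longrightarrow> x = y"
  unfolding lat_le_def by (metis meet_comm)
lemma imp_one: "x \<in> M \<Longrightarrow> y \<in> M \<Longrightarrow> imp x y = one \<longleftrightarrow> le x y"
proof
  assume x: "x \<in> M" "y \<in> M"
  { assume "imp x y = one"
    then have "le one (imp x y)" using refl by simp
    then show "le x y" using res[of x y one] x by simp }
  { assume "le x y"
    then have "le one (imp x y)" using res[of x y one] x by simp
    then show "imp x y = one" using antisym top x by (metis cl one_in) }
qed
lemma mult_mono: "x \<in> M \<Longrightarrow> y \<in> M \<Longrightarrow> z \<in> M \<Longrightarrow> le x y \<Longrightarrow> le (mult x z) (mult y z)"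
proof -
  assume a: "x \<in> M" "y \<in> M" "z \<in> M" "le x y"
  have "le y (imp z (mult z y))" using res[of z "mult z y" y] a refl by simp
  then have "le x (imp z (mult z y))" using trans a by (meson cl)
  then have "le (mult z x) (mult z y)" using res a by simp
  then show ?thesis using a mult_comm by metis
qed
lemma mult_le: "x \<in> M \<Longrightarrow> y \<in> M \<Longrightarrow> le (mult x y) x"
  using mult_mono[of y one x] top mult_comm by (metis one_in one_mult)
lemma join_ge1: "x \<in> M \<Longrightarrow> y \<in> M \<Longrightarrow> le x (join x y)"
  unfolding lat_le_def using absorb by blast
lemma join_ge2: "x \<in> M \<Longrightarrow> y \<in> M \<Longrightarrow> le y (join x y)"
  using join_ge1 join_comm by metis

lemma tau_imp: "x \<in> M \<Longrightarrow> y \<in> M \<Longrightarrow> tau (imp x y) = imp (tau x) (tau (meet x y))"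
  using SO unfolding state_operator_def by blast
lemma tau_mult: "x \<in> M \<Longrightarrow> y \<in> M \<Longrightarrow> tau (mult x y) = mult (tau x) (tau (imp x (mult x y)))"
  using SO unfolding state_operator_def by blast
lemma tau_tmult: "x \<in> M \<Longrightarrow> y \<in> M \<Longrightarrow> tau (mult (tau x) (tau y)) = mult (tau x) (tau y)"
  using SO unfolding state_operator_def by blast

lemma div: "a \<in> M \<Longrightarrow> b \<in> M \<Longrightarrow> meet a b = mult a (imp a b)"
  using BL by (auto simp: BL_algebra_def)
lemma tau_one[simp]: "tau one = one"
proof -
  have "imp one one = one" using imp_one refl by simp
  then have "tau one = imp (tau one) (tau (meet one one))" using tau_imp[of one one] by simp
  also have "meet one one = one" using refl unfolding lat_le_def by simp
  finally have e: "tau one = imp (tau one) (tau one)" .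
  have "imp (tau one) (tau one) = one" using imp_one refl tau_in one_in by blast
  with e show ?thesis by simp
qed
lemma tau_tau: "x \<in> M \<Longrightarrow> tau (tau x) = tau x"
  using tau_tmult[of x one] by simp
lemma tau_mono: "x \<in> M \<Longrightarrow> y \<in> M \<Longrightarrow> le x y \<Longrightarrow> le (tau x) (tau y)"
proof -
  assume a: "x \<in> M" "y \<in> M" "le x y"
  have "meet y x = x" using a meet_comm unfolding lat_le_def by metis
  then have xe: "x = mult y (imp y x)" using div a by simp
  define w where "w = tau (imp y (mult y (imp y x)))"
  have wM: "w \<in> M" unfolding w_def using a by simp
  have "tau x = mult (tau y) w"
    unfolding w_def using tau_mult[of y "imp y x"] a xe by simp
  then show ?thesis using mult_le[of "tau y" w] a wM by simp
qed
lemma tauM_mult: "a \<in> tau ` M \<Longrightarrow> b \<in> tau ` M \<Longrightarrow> mult a b \<in> tau ` M"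
proof -
  assume "a \<in> tau ` M" "b \<in> tau ` M"
  then obtain x y where xy: "x \<in> M" "y \<in> M" "a = tau x" "b = tau y" by blast
  have "mult a b = tau (mult (tau x) (tau y))" using tau_tmult xy by simp
  moreover have "mult (tau x) (tau y) \<in> M" using xy by simp
  ultimately show ?thesis by blast
qed
lemma ker_mult: "x \<in> M \<Longrightarrow> y \<in> M \<Longrightarrow> tau x = one \<Longrightarrow> tau y = one \<Longrightarrow> tau (mult x y) = one"
proof -
  assume a: "x \<in> M" "y \<in> M" "tau x = one" "tau y = one"
  have m: "mult x y \<in> M" "imp x (mult x y) \<in> M" using a by auto
  have "le y (imp x (mult x y))" using res[of x "mult x y" y] a refl m by simp
  then have "le one (tau (imp x (mult x y)))" using tau_mono a m by fastforce
  then have "tau (imp x (mult x y)) = one" using antisym[OF one_in tau_in[OF m(2)]] top[OF tau_in[OF m(2)]] by simp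
  then show ?thesis using tau_mult a by simp
qed
lemma ker_up: "x \<in> M \<Longrightarrow> y \<in> M \<Longrightarrow> tau x = one \<Longrightarrow> le x y \<Longrightarrow> tau y = one"
proof -
  assume a: "x \<in> M" "y \<in> M" "tau x = one" "le x y"
  then have "le one (tau y)" using tau_mono by fastforce
  then show ?thesis using antisym[OF one_in tau_in[OF a(2)]] top[OF tau_in[OF a(2)]] by simp
qed

lemma Fm: "BL_filter S meet mult F \<Longrightarrow> x \<in> F \<Longrightarrow> y \<in> F \<Longrightarrow> mult x y \<in> F"
  unfolding BL_filter_def by blast
lemma Fu: "BL_filter S meet mult F \<Longrightarrow> x \<in> F \<Longrightarrow> y \<in> S \<Longrightarrow> le x y \<Longrightarrow> y \<in> F"
  unfolding BL_filter_def by blast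
lemma Fs: "BL_filter S meet mult F \<Longrightarrow> x \<in> F \<Longrightarrow> x \<in> S"
  unfolding BL_filter_def by blast

definition up :: "'a set \<Rightarrow> 'a set" where
  "up G = {z \<in> M. \<exists>g\<in>G. le g z}"

lemma up_sub: "G \<subseteq> M \<Longrightarrow> G \<subseteq> up G"
  unfolding up_def using refl by blast

lemma up_tau_filter:
  assumes G: "G \<subseteq> M" "G \<noteq> {}" "\<forall>a\<in>G. \<forall>b\<in>G. mult a b \<in> G"
    and T: "\<forall>z\<in>up G. tau z \<in> up G"
  shows "tau_filter M meet mult tau (up G)"
  unfolding tau_filter_def BL_filter_def
proof (intro conjI ballI impI)
  show "up G \<subseteq> M" unfolding up_def by blast
  show "up G \<noteq> {}" using up_sub G by blast
  show "tau ` up G \<subseteq> up G" using T by blast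
next
  fix x y assume "x \<in> up G" "y \<in> up G"
  then obtain g h where gh: "g \<in> G" "h \<in> G" "le g x" "le h y" "x \<in> M" "y \<in> M"
    unfolding up_def by blast
  have gM: "g \<in> M" "h \<in> M" using gh G by auto
  have "le (mult g h) (mult x h)" using mult_mono gh gM by simp
  moreover have "le (mult h x) (mult y x)" using mult_mono gh gM by simp
  ultimately have "le (mult g h) (mult x y)" using trans[of "mult g h" "mult x h" "mult x y"] gh gM mult_comm by simp
  moreover have "mult g h \<in> G" using G gh by blast
  ultimately show "mult x y \<in> up G" unfolding up_def using gh by auto
next
  fix x y assume "x \<in> up G" "y \<in> M" "le x y"
  then obtain g where "g \<in> G" "le g x" "x \<in> M" unfolding up_def by blast
  then show "y \<in> up G" unfolding up_def using trans \<open>y \<in> M\<close> \<open>le x y\<close> G by blast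
qed

lemma up_least: "BL_filter M meet mult F \<Longrightarrow> G \<subseteq> F \<Longrightarrow> up G \<subseteq> F"
proof
  fix z assume BF: "BL_filter M meet mult F" and GF: "G \<subseteq> F" and "z \<in> up G"
  then obtain g where "g \<in> G" "le g z" "z \<in> M" unfolding up_def by blast
  then show "z \<in> F" using Fu[OF BF, of g z] GF by blast
qed

lemma filter_one: "BL_filter M meet mult F \<Longrightarrow> one \<in> F"
proof -
  assume BF: "BL_filter M meet mult F"
  then obtain f where f: "f \<in> F" unfolding BL_filter_def by blast
  show "one \<in> F" by (rule Fu[OF BF f one_in top[OF Fs[OF BF f]]])
qed

lemma main:
  assumes A2: "faithful M one tau \<longrightarrow> SI_BL (tau ` M) meet mult one"
  and A3: "Ker M one tau = {one} \<or> SI_hoop (Ker M one tau) mult imp one"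
  and A4: "\<forall>x\<in>Ker M one tau. \<forall>y\<in>tau ` M. join x y = one \<longrightarrow> x = one \<or> y = one"
  shows "SI_state_BL M meet mult one tau"
proof (cases "Ker M one tau = {one}")
  case True
  then have "SI_BL (tau ` M) meet mult one" using A2 unfolding faithful_def by simp
  then obtain G0 where G0: "BL_filter (tau ` M) meet mult G0" "G0 \<noteq> {one}"
    "\<forall>F. BL_filter (tau ` M) meet mult F \<and> F \<noteq> {one} \<longrightarrow> G0 \<subseteq> F"
    unfolding SI_BL_def least_nontrivial_def by blast
  have G0M: "G0 \<subseteq> M" using G0(1) unfolding BL_filter_def by auto
  have G0ne: "G0 \<noteq> {}" using G0(1) unfolding BL_filter_def by auto
  have G0m: "\<forall>a\<in>G0. \<forall>b\<in>G0. mult a b \<in> G0" using G0(1) unfolding BL_filter_def by auto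
  have T: "\<forall>z\<in>up G0. tau z \<in> up G0"
  proof
    fix z assume "z \<in> up G0"
    then obtain g where g: "g \<in> G0" "le g z" "z \<in> M" unfolding up_def by blast
    then obtain w where w: "w \<in> M" "g = tau w" using G0(1) unfolding BL_filter_def by blast
    have "tau g = g" using w tau_tau by simp
    then have "le g (tau z)" using tau_mono[of g z] g G0M by auto
    then have "tau z \<in> G0" using G0(1) g unfolding BL_filter_def using g(3) by blast
    then show "tau z \<in> up G0" using up_sub G0M by blast
  qed
  have TF: "tau_filter M meet mult tau (up G0)" using up_tau_filter G0M G0ne G0m T by blast
  have NT: "up G0 \<noteq> {one}" using up_sub[OF G0M] G0(2) G0ne subset_singletonD by metis
  have L: "up G0 \<subseteq> F" if F: "tau_filter M meet mult tau F" "F \<noteq> {one}" for F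
  proof -
    have BF: "BL_filter M meet mult F" using F unfolding tau_filter_def by blast
    obtain a where a: "a \<in> F" "a \<noteq> one" using F(2) BF unfolding BL_filter_def by blast
    have aM: "a \<in> M" using a BF unfolding BL_filter_def by blast
    have ta: "tau a \<in> F" using F a unfolding tau_filter_def by blast
    have tan: "tau a \<noteq> one" using True a aM unfolding Ker_def by blast
    have "BL_filter (tau ` M) meet mult (F \<inter> tau ` M)"
      unfolding BL_filter_def
    proof (intro conjI ballI impI)
      show "F \<inter> tau ` M \<subseteq> tau ` M" by blast
      show "F \<inter> tau ` M \<noteq> {}" using ta aM by blast
    next
      fix x y assume "x \<in> F \<inter> tau ` M" "y \<in> F \<inter> tau ` M"
      then show "mult x y \<in> F \<inter> tau ` M" using Fm[OF BF] tauM_mult by simp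
    next
      fix x y assume "x \<in> F \<inter> tau ` M" "y \<in> tau ` M" "le x y"
      then show "y \<in> F \<inter> tau ` M" using Fu[OF BF, of x y] by auto
    qed
    moreover have "F \<inter> tau ` M \<noteq> {one}" using ta tan aM by blast
    ultimately have "G0 \<subseteq> F" using G0(3) by blast
    then show ?thesis using up_least BF by blast
  qed
  show ?thesis unfolding SI_state_BL_def least_nontrivial_def
    by (rule exI[of _ "up G0"]) (use TF NT L in blast)
next
  case False
  then have "SI_hoop (Ker M one tau) mult imp one" using A3 by simp
  then obtain H0 where H0: "hoop_filter (Ker M one tau) mult imp one H0" "H0 \<noteq> {one}"
    "\<forall>F. hoop_filter (Ker M one tau) mult imp one F \<and> F \<noteq> {one} \<longrightarrow> H0 \<subseteq> F"
    unfolding SI_hoop_def least_nontrivial_def by blast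
  have H0K: "H0 \<subseteq> Ker M one tau" using H0(1) unfolding hoop_filter_def by auto
  then have H0M: "H0 \<subseteq> M" unfolding Ker_def by auto
  have H0ne: "H0 \<noteq> {}" using H0(1) unfolding hoop_filter_def by auto
  have H0m: "\<forall>a\<in>H0. \<forall>b\<in>H0. mult a b \<in> H0" using H0(1) unfolding hoop_filter_def by auto
  have T: "\<forall>z\<in>up H0. tau z \<in> up H0"
  proof
    fix z assume "z \<in> up H0"
    then obtain g where g: "g \<in> H0" "le g z" "z \<in> M" unfolding up_def by blast
    have "tau g = one" "g \<in> M" using g H0K unfolding Ker_def by auto
    then have "tau z = one" using ker_up g by blast
    moreover have "one \<in> up H0" unfolding up_def using g \<open>g \<in> M\<close> top by auto
    ultimately show "tau z \<in> up H0" by simp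
  qed
  have TF: "tau_filter M meet mult tau (up H0)" using up_tau_filter H0M H0ne H0m T by blast
  have NT: "up H0 \<noteq> {one}" using up_sub[OF H0M] H0(2) H0ne subset_singletonD by metis
  have oneK: "one \<in> Ker M one tau" unfolding Ker_def by simp
  obtain k where k: "k \<in> Ker M one tau" "k \<noteq> one" using False oneK by blast
  have kM: "k \<in> M" "tau k = one" using k unfolding Ker_def by auto
  have L: "up H0 \<subseteq> F" if F: "tau_filter M meet mult tau F" "F \<noteq> {one}" for F
  proof -
    have BF: "BL_filter M meet mult F" using F unfolding tau_filter_def by blast
    obtain a where a: "a \<in> F" "a \<noteq> one" using F(2) BF unfolding BL_filter_def by blast
    have aM: "a \<in> M" using a BF unfolding BL_filter_def by blast
    have ta: "tau a \<in> F" using F a unfolding tau_filter_def by blast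
    have o: "one \<in> F" using filter_one BF by blast
    have HF: "hoop_filter (Ker M one tau) mult imp one (F \<inter> Ker M one tau)"
      unfolding hoop_filter_def
    proof (intro conjI ballI impI)
      show "F \<inter> Ker M one tau \<subseteq> Ker M one tau" by blast
      show "F \<inter> Ker M one tau \<noteq> {}" using o oneK by blast
    next
      fix x y assume "x \<in> F \<inter> Ker M one tau" "y \<in> F \<inter> Ker M one tau"
      then show "mult x y \<in> F \<inter> Ker M one tau"
        using Fm[OF BF, of x y] ker_mult[of x y] unfolding Ker_def by auto
    next
      fix x y assume xy: "x \<in> F \<inter> Ker M one tau" "y \<in> Ker M one tau" "imp x y = one"
      then have "x \<in> M" "y \<in> M" unfolding Ker_def by auto
      then have "le x y" using imp_one xy by blast
      then show "y \<in> F \<inter> Ker M one tau" using Fu[OF BF, of x y] xy \<open>y \<in> M\<close> by blast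
    qed
    have "\<exists>j. j \<in> F \<inter> Ker M one tau \<and> j \<noteq> one"
    proof (cases "tau a = one")
      case True
      then show ?thesis using a aM unfolding Ker_def by blast
    next
      case False
      define j where "j = join k (tau a)"
      have jM: "j \<in> M" unfolding j_def using kM aM by simp
      have "le (tau a) j" unfolding j_def using join_ge2 kM aM by simp
      then have jF: "j \<in> F" using Fu[OF BF ta jM] by blast
      have "le k j" unfolding j_def using join_ge1 kM aM by simp
      then have "tau j = one" using ker_up kM jM by blast
      moreover have "j \<noteq> one" using A4 k False aM unfolding j_def by blast
      ultimately show ?thesis using jF jM unfolding Ker_def by blast
    qed
    then have "F \<inter> Ker M one tau \<noteq> {one}" by blast
    then have "H0 \<subseteq> F" using H0(3) HF by blast
    then show ?thesis using up_least BF by blast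
  qed
  show ?thesis unfolding SI_state_BL_def least_nontrivial_def
    by (rule exI[of _ "up H0"]) (use TF NT L in blast)
qed

end

theorem theorem2p3:
  fixes M :: "'a set" and meet join mult imp :: "'a \<Rightarrow> 'a \<Rightarrow> 'a"
    and zero one :: 'a and tau :: "'a \<Rightarrow> 'a"
  assumes "state_BL_algebra M meet join mult imp zero one tau"
    and "faithful M one tau \<longrightarrow> SI_BL (tau ` M) meet mult one"
    and "Ker M one tau = {one} \<or> SI_hoop (Ker M one tau) mult imp one"
    and "\<forall>x\<in>Ker M one tau. \<forall>y\<in>tau ` M. join x y = one \<longrightarrow> x = one \<or> y = one"
  shows "SI_state_BL M meet mult one tau"
proof -
  interpret sbl M meet join mult imp zero one tau by (rule sbl.intro) (rule assms(1))
  show ?thesis by (rule main) (rule assms(2), rule assms(3), rule assms(4))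
qed

end
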